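(* Let $C=\bigcap_{i=1}^{m}\{x\in\mathbb{R}^n:\langle x,v_i\rangle\ge 0\}$ be a strictly convex good cone, $C_0=C\setminus\{0\}$, and let $C_0^{\lambda}=(T^n\times C_0)/\Delta$ with $T^n$ acting by multiplication on the first factor. Then $C_0^{\lambda}$ is $T^n$-equivariantly homeomorphic to the toric symplectic cone $S=\big((\iota^*\circ u)^{-1}(0)\setminus\{0\}\big)/K$ associated with $C$.
   Context: A good cone in $\mathbb{R}^n$ is a rational polyhedral cone $C=\bigcap_{i=1}^m\{x:\langle x,v_i\rangle\ge 0\}$ (inequalities minimal), with facets $F_i=\{x\in C:\langle x,v_i\rangle=0\}$ and $v_i\in\mathbb{Z}^n$ the primitive inward normal to $F_i$, such that for $0<l<n$ every codimension-$l$ face is the intersection of exactly $l$ facets and the corresponding normals generate a rank-$l$ direct summand of $\mathbb{Z}^n$; strictly convex means $C$ contains no line. Let $\pi_{\mathbb{Z}}:\mathbb{Z}^m\to\mathbb{Z}^n$ send the $i$-th standard basis vector $e_i$ to $v_i$, with induced maps $\pi_{\mathbb{R}}:\mathbb{R}^m\to\mathbb{R}^n$ and $\pi_T:T^m=\mathbb{R}^m/\mathbb{Z}^m\to T^n=\mathbb{R}^n/\mathbb{Z}^n$ (surjective); let $K=\ker\pi_T$ with inclusion $\iota:K\to T^m$, and $\iota^*:(\mathfrak{t}^m)^*\to\mathfrak{k}^*$ the dual of the induced Lie algebra map. Let $u:\mathbb{C}^m\to(\mathfrak{t}^m)^*=\mathbb{R}^m$, $u(z)=(|z_1|^2,\dots,|z_m|^2)$.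 $T^m$ acts on $\mathbb{C}^m$ in the standard way, $K$ acts freely on $(\iota^*\circ u)^{-1}(0)\setminus\{0\}$, and $T^n=T^m/K$ acts on the quotient $S$ (this $S$ is the toric symplectic cone, i.e. the symplectization of the contact toric manifold, associated with $C$). The equivalence relation $\Delta$ on $T^n\times C_0$: $(g,p)\Delta(h,q)$ iff $p=q$ and $g^{-1}h\in S_p$, where $S_p\subset T^n$ is the closed subgroup generated by the images in $T^n=\mathbb{R}^n/\mathbb{Z}^n$ of the lines $\mathbb{R}v_i$ for all $i$ with $p\in F_i$. *)

theory Defs
  imports "HOL-Analysis.Analysis"
begin

text \<open>T^k = R^k/Z^k is modelled (via x mapsto exp(2 pi i x), componentwise) as the
  set of vectors of unit complex numbers, with componentwise multiplication.\<close>

definition torus :: "(complex^'a) set" where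
  "torus = {z. \<forall>i. cmod (z$i) = 1}"

definition expT :: "real^'a \<Rightarrow> complex^'a" where
  "expT x = (\<chi> j. cis (2 * pi * (x$j)))"

definition tmult :: "complex^'a \<Rightarrow> complex^'a \<Rightarrow> complex^'a" where
  "tmult g h = (\<chi> j. g$j * h$j)"

definition tinv :: "complex^'a \<Rightarrow> complex^'a" where
  "tinv g = (\<chi> j. inverse (g$j))"

definition tone :: "complex^'a" where
  "tone = (\<chi> j. 1)"

definition closed_subgroup_generated :: "(complex^'a) set \<Rightarrow> (complex^'a) set" where
  "closed_subgroup_generated A =
     \<Inter>{H. H \<subseteq> torus \<and> closed H \<and> tone \<in> H \<and>
          (\<forall>g\<in>H. \<forall>h\<in>H. tmult g h \<in> H) \<and> (\<forall>g\<in>H. tinv g \<in> H) \<and> A \<subseteq> H}"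

definition vR :: "('m \<Rightarrow> int^'n) \<Rightarrow> 'm \<Rightarrow> real^'n" where
  "vR v i = (\<chi> j. of_int (v i $ j))"

definition cone :: "('m \<Rightarrow> int^'n) \<Rightarrow> (real^'n) set" where
  "cone v = {x. \<forall>i. x \<bullet> vR v i \<ge> 0}"

definition facet :: "('m \<Rightarrow> int^'n) \<Rightarrow> 'm \<Rightarrow> (real^'n) set" where
  "facet v i = {x \<in> cone v. x \<bullet> vR v i = 0}"

definition int_lattice :: "(real^'n) set" where
  "int_lattice = {x. \<forall>j. x$j \<in> \<int>}"

definition primitive :: "int^'n \<Rightarrow> bool" where
  "primitive w \<longleftrightarrow> (\<forall>(k::int) (u::int^'n). w = (\<chi> j. k * u$j) \<longrightarrow> \<bar>k\<bar> = 1)"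

definition normal_lattice :: "('m \<Rightarrow> int^'n) \<Rightarrow> 'm set \<Rightarrow> (real^'n) set" where
  "normal_lattice v I = {(\<Sum>i\<in>I. of_int (c i) *\<^sub>R vR v i) | c. True}"

definition direct_summand :: "(real^'n) set \<Rightarrow> bool" where
  "direct_summand L \<longleftrightarrow> (\<exists>H. H \<subseteq> int_lattice \<and> 0 \<in> H \<and>
      (\<forall>a\<in>H. \<forall>b\<in>H. a + b \<in> H) \<and> (\<forall>a\<in>H. - a \<in> H) \<and>
      L \<inter> H = {0} \<and> (\<forall>x\<in>int_lattice. \<exists>a\<in>L. \<exists>b\<in>H. x = a + b))"

definition good_cone :: "('m::finite \<Rightarrow> int^'n::finite) \<Rightarrow> bool" where
  "good_cone v \<longleftrightarrow>
     (\<forall>i. primitive (v i)) \<and>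
     \<comment> \<open>the inequalities are minimal\<close>
     (\<forall>i. {x. \<forall>j. j \<noteq> i \<longrightarrow> x \<bullet> vR v j \<ge> 0} \<noteq> cone v) \<and>
     \<comment> \<open>the F i are facets (codimension-one faces)\<close>
     (\<forall>i. facet v i face_of cone v \<and> aff_dim (facet v i) = int CARD('n) - 1) \<and>
     \<comment> \<open>codimension-l faces, 0 < l < n\<close>
     (\<forall>l F. 0 < l \<and> l < CARD('n) \<and> F face_of cone v \<and> aff_dim F = int CARD('n) - int l \<longrightarrow>
        (let I = {i. F \<subseteq> facet v i} in
           card I = l \<and> F = (\<Inter>i\<in>I. facet v i) \<and>
           direct_summand (normal_lattice v I) \<and> dim (normal_lattice v I) = l))"

definition strictly_convex :: "(real^'n) set \<Rightarrow> bool" where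
  "strictly_convex C \<longleftrightarrow> (\<forall>x. x \<in> C \<and> - x \<in> C \<longrightarrow> x = 0)"

definition quotient_topology :: "'a topology \<Rightarrow> ('a \<times> 'a) set \<Rightarrow> 'a set topology" where
  "quotient_topology X R = topology (\<lambda>U. U \<subseteq> topspace X // R \<and>
       openin X {x \<in> topspace X. R `` {x} \<in> U})"

text \<open>pi_T : T^m -> T^n induced by pi_Z (e_i mapsto v_i).\<close>
definition piT :: "('m::finite \<Rightarrow> int^'n) \<Rightarrow> complex^'m \<Rightarrow> complex^'n" where
  "piT v w = (\<chi> j. \<Prod>i\<in>UNIV. (w$i) powi (v i $ j))"

definition Kker :: "('m::finite \<Rightarrow> int^'n) \<Rightarrow> (complex^'m) set" where
  "Kker v = {w \<in> torus. piT v w = tone}"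

definition lieK :: "('m::finite \<Rightarrow> int^'n) \<Rightarrow> (real^'m) set" where
  "lieK v = {\<xi>. \<forall>t::real. expT (t *\<^sub>R \<xi>) \<in> Kker v}"

definition umap :: "complex^'m \<Rightarrow> real^'m" where
  "umap z = (\<chi> i. (cmod (z$i))^2)"

text \<open>(iota^* o u)^{-1}(0) minus the origin; iota^* is restriction of functionals to k.\<close>
definition Zlevel :: "('m::finite \<Rightarrow> int^'n) \<Rightarrow> (complex^'m) set" where
  "Zlevel v = {z. \<forall>\<xi>\<in>lieK v. \<xi> \<bullet> umap z = 0} - {0}"

definition tact :: "complex^'m \<Rightarrow> complex^'m \<Rightarrow> complex^'m" where
  "tact g z = (\<chi> i. g$i * z$i)"

definition orbitrel :: "('m::finite \<Rightarrow> int^'n) \<Rightarrow> ((complex^'m) \<times> (complex^'m)) set" where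
  "orbitrel v = {(z, w). z \<in> Zlevel v \<and> w \<in> Zlevel v \<and> (\<exists>k\<in>Kker v. w = tact k z)}"

definition symp_cone_top :: "('m::finite \<Rightarrow> int^'n) \<Rightarrow> (complex^'m) set topology" where
  "symp_cone_top v = quotient_topology (subtopology euclidean (Zlevel v)) (orbitrel v)"

definition Sp :: "('m \<Rightarrow> int^'n) \<Rightarrow> real^'n \<Rightarrow> (complex^'n) set" where
  "Sp v p = closed_subgroup_generated {expT (t *\<^sub>R vR v i) | t i. p \<in> facet v i}"

definition Delta :: "('m \<Rightarrow> int^'n) \<Rightarrow> (((complex^'n) \<times> (real^'n)) \<times> ((complex^'n) \<times> (real^'n))) set" where
  "Delta v = {((g, p), (h, q)). g \<in> torus \<and> h \<in> torus \<and> p \<in> cone v - {0} \<and> q = p \<and>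
                 tmult (tinv g) h \<in> Sp v p}"

definition Clambda_top :: "('m \<Rightarrow> int^'n) \<Rightarrow> ((complex^'n) \<times> (real^'n)) set topology" where
  "Clambda_top v = quotient_topology
     (prod_topology (subtopology euclidean torus) (subtopology euclidean (cone v - {0}))) (Delta v)"

end

theory Submission
  imports Defs
begin


lemma cis_sum: "finite A \<Longrightarrow> (\<Prod>i\<in>A. cis (f i)) = cis (\<Sum>i\<in>A. f i)"
  by (induction A rule: finite_induct) (auto simp: cis_mult)

lemma expT_add: "expT (x + y) = tmult (expT x) (expT y)"
  by (simp add: expT_def tmult_def cis_mult distrib_left vec_eq_iff)

lemma expT_0: "expT 0 = tone"
  by (simp add: expT_def tone_def vec_eq_iff)

lemma expT_torus: "expT x \<in> torus"
  by (simp add: expT_def torus_def)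

lemma tone_torus: "tone \<in> torus" by (simp add: tone_def torus_def)

lemma tmult_torus: "g \<in> torus \<Longrightarrow> h \<in> torus \<Longrightarrow> tmult g h \<in> torus"
  by (simp add: tmult_def torus_def norm_mult)

lemma tinv_torus: "g \<in> torus \<Longrightarrow> tinv g \<in> torus"
  by (simp add: tinv_def torus_def norm_inverse)

lemma torus_nz: "g \<in> torus \<Longrightarrow> g$i \<noteq> 0"
  by (auto simp: torus_def) (metis norm_zero zero_neq_one)

lemma tmult_assoc: "tmult (tmult a b) c = tmult a (tmult b c)"
  by (simp add: tmult_def vec_eq_iff mult.assoc)
lemma tmult_comm: "tmult a b = tmult b a"
  by (simp add: tmult_def vec_eq_iff mult.commute)
lemma tmult_tone[simp]: "tmult tone a = a" "tmult a tone = a"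
  by (simp_all add: tmult_def tone_def vec_eq_iff)
lemma tmult_tinv: "g \<in> torus \<Longrightarrow> tmult (tinv g) g = tone" "g \<in> torus \<Longrightarrow> tmult g (tinv g) = tone"
  by (auto simp: tmult_def tinv_def tone_def vec_eq_iff torus_nz)
lemma tinv_tmult: "tinv (tmult a b) = tmult (tinv a) (tinv b)"
  by (simp add: tmult_def tinv_def vec_eq_iff)
lemma tinv_tinv[simp]: "tinv (tinv a) = a"
  by (simp add: tinv_def vec_eq_iff)
lemma tinv_tone[simp]: "tinv tone = tone"
  by (simp add: tinv_def tone_def vec_eq_iff)

lemma tact_tmult: "tact (tmult g h) z = tact g (tact h z)"
  by (simp add: tact_def tmult_def vec_eq_iff mult.assoc)
lemma tact_tone[simp]: "tact tone z = z"
  by (simp add: tact_def tone_def vec_eq_iff)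

definition piR :: "('m::finite \<Rightarrow> int^'n) \<Rightarrow> real^'m \<Rightarrow> real^'n" where
  "piR v y = (\<Sum>i\<in>UNIV. y$i *\<^sub>R vR v i)"

lemma piT_tmult: "piT v (tmult a b) = tmult (piT v a) (piT v b)"
  by (simp add: piT_def tmult_def vec_eq_iff power_int_mult_distrib prod.distrib)

lemma piT_tinv: "piT v (tinv a) = tinv (piT v a)"
  by (simp add: piT_def tinv_def vec_eq_iff power_int_inverse prod_inversef[symmetric, unfolded comp_def])

lemma piT_tone[simp]: "piT v tone = tone"
  by (simp add: piT_def tone_def vec_eq_iff)

lemma piT_torus: "a \<in> torus \<Longrightarrow> piT v a \<in> torus"
  by (simp add: piT_def torus_def norm_power_int flip: prod_norm)

lemma piT_expT: "piT v (expT y) = expT (piR v y)"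
proof -
  have "piT v (expT y) $ j = expT (piR v y) $ j" for j
  proof -
    have "piT v (expT y) $ j = (\<Prod>i\<in>UNIV. cis (of_int (v i $ j) * (2 * pi * y$i)))"
      by (simp add: piT_def expT_def cis_power_int)
    also have "\<dots> = cis (\<Sum>i\<in>UNIV. of_int (v i $ j) * (2 * pi * y$i))"
      by (simp add: cis_sum)
    also have "(\<Sum>i\<in>UNIV. of_int (v i $ j) * (2 * pi * y$i)) = 2 * pi * (piR v y $ j)"
      by (simp add: piR_def vR_def sum_component sum_distrib_left mult_ac)
    finally show ?thesis by (simp add: expT_def)
  qed
  then show ?thesis by (simp add: vec_eq_iff)
qed

lemma piR_linear: "linear (piR v)"
  by (auto simp: piR_def linear_iff scaleR_add_left sum.distrib scaleR_sum_right)



definition Amap :: "('m::finite \<Rightarrow> int^'n) \<Rightarrow> real^'n \<Rightarrow> real^'m" where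
  "Amap v p = (\<chi> i. p \<bullet> vR v i)"

lemma Amap_linear: "linear (Amap v)"
  by (auto simp: Amap_def linear_iff vec_eq_iff inner_add_left)

lemma inner_Amap: "r \<bullet> Amap v p = piR v r \<bullet> p"
  apply (simp add: Amap_def piR_def inner_vec_def sum_distrib_left sum_distrib_right)
  apply (subst sum.swap)
  apply (simp add: mult_ac)
  done

lemma Amap_cone: "p \<in> cone v \<longleftrightarrow> (\<forall>i. Amap v p $ i \<ge> 0)"
  by (simp add: Amap_def cone_def)

lemma Amap_zero:
  assumes "strictly_convex (cone v)" "Amap v p = 0" shows "p = 0"
proof -
  have "p \<in> cone v" "-p \<in> cone v" using assms(2)
    by (auto simp: cone_def Amap_def vec_eq_iff)
  then show ?thesis using assms(1) by (simp add: strictly_convex_def)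
qed

lemma Amap_inj:
  assumes "strictly_convex (cone v)" shows "inj (Amap v)"
proof (rule injI)
  fix x y assume "Amap v x = Amap v y"
  then have "Amap v (x - y) = 0" using linear_diff[OF Amap_linear[of v]] by simp
  then show "x = y" using Amap_zero[OF assms] by fastforce
qed

lemma piR_surj:
  assumes sc: "strictly_convex (cone v)" shows "\<exists>y. piR v y = x"
proof (rule ccontr)
  assume "\<nexists>y. piR v y = x"
  then have ne: "range (piR v) \<noteq> UNIV" by (metis UNIV_I rangeE)
  have "subspace (range (piR v))"
    by (rule linear_subspace_image[OF piR_linear subspace_UNIV])
  then have sp: "span (range (piR v)) = range (piR v)" by (simp add: span_eq_iff)
  have "span (range (piR v)) \<noteq> UNIV" using sp ne by argo
  from span_not_UNIV_orthogonal[OF this] obtain a where a: "a \<noteq> 0" "\<forall>x\<in>span (range (piR v)). a \<bullet> x = 0" by blast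
  then have a2: "\<forall>x\<in>range (piR v). a \<bullet> x = 0" using sp by simp
  have "Amap v a \<bullet> Amap v a = 0"
    using a2 by (simp add: inner_Amap inner_commute)
  then have "Amap v a = 0" by simp
  then show False using Amap_zero[OF sc] a(1) by simp
qed

lemma range_Amap:
  assumes "\<And>\<xi>. piR v \<xi> = 0 \<Longrightarrow> \<xi> \<bullet> u = 0"
  shows "\<exists>p. u = Amap v p"
proof -
  let ?S = "range (Amap v)"
  have "subspace ?S"
    by (rule linear_subspace_image[OF Amap_linear subspace_UNIV])
  then have sp: "span ?S = ?S" by (simp add: span_eq_iff)
  obtain y z where yz: "y \<in> span ?S" "\<And>w. w \<in> span ?S \<Longrightarrow> orthogonal z w" "u = y + z"
    using orthogonal_subspace_decomp_exists by blast
  have "piR v z \<bullet> p = 0" for p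
    using yz(2)[of "Amap v p"] sp by (auto simp: orthogonal_def inner_Amap)
  then have "piR v z \<bullet> piR v z = 0" by blast
  then have "piR v z = 0" by simp
  then have "z \<bullet> u = 0" by (rule assms)
  moreover have "z \<bullet> y = 0" using yz(2)[OF yz(1)] by (simp add: orthogonal_def)
  ultimately have "z \<bullet> z = 0" using yz(3) by (simp add: inner_add_right)
  then have "z = 0" by simp
  then show ?thesis using yz(1,3) sp by auto
qed

lemma expT_eq_tone: "expT x = tone \<longleftrightarrow> (\<forall>j. x$j \<in> \<int>)"
proof -
  have "cis (2 * pi * a) = 1 \<longleftrightarrow> a \<in> \<int>" for a :: real
  proof
    assume "cis (2 * pi * a) = 1"
    then have "cos (2 * pi * a) = 1" by (metis cis.sel(1) one_complex.sel(1))
    then obtain k :: int where "2 * pi * a = 2 * pi * k" by (auto simp: cos_one_2pi_int)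
    then have "a = k" by simp
    then show "a \<in> \<int>" by simp
  qed (auto)
  then show ?thesis by (simp add: expT_def tone_def vec_eq_iff)
qed

lemma lieK_iff: "\<xi> \<in> lieK v \<longleftrightarrow> piR v \<xi> = 0"
proof
  assume "piR v \<xi> = 0"
  then have "piR v (t *\<^sub>R \<xi>) = 0" for t using linear_scale[OF piR_linear[of v]] by simp
  then show "\<xi> \<in> lieK v"
    by (simp add: lieK_def Kker_def expT_torus piT_expT expT_0)
next
  assume "\<xi> \<in> lieK v"
  then have h: "\<forall>t::real. \<forall>j. t * (piR v \<xi> $ j) \<in> \<int>"
    by (simp add: lieK_def Kker_def piT_expT expT_eq_tone linear_scale[OF piR_linear])
  show "piR v \<xi> = 0"
  proof (rule ccontr)
    assume "piR v \<xi> \<noteq> 0"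
    then obtain j where j: "piR v \<xi> $ j \<noteq> 0" by (auto simp: vec_eq_iff)
    have "(1/(2 * (piR v \<xi> $ j))) * (piR v \<xi> $ j) = 1/2" using j by simp
    moreover have "(1/2::real) \<notin> \<int>"
    proof
      assume "(1/2::real) \<in> \<int>"
      then obtain k :: int where "1/2 = real_of_int k" by (auto elim: Ints_cases)
      then have "1 = 2 * real_of_int k" by simp
      then have "1 = 2 * k" by linarith
      then show False by presburger
    qed
    ultimately show False using h by metis
  qed
qed



lemma closed_torus: "closed (torus :: (complex^'a) set)"
  unfolding torus_def
  by (intro closed_Collect_all closed_Collect_eq continuous_intros)

lemma bounded_torus: "bounded (torus :: (complex^'a::finite) set)"
proof -
  have "norm w \<le> real CARD('a)" if "w \<in> torus" for w :: "complex^'a"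
  proof -
    have "norm w \<le> (\<Sum>i\<in>UNIV. norm (w$i))"
      unfolding norm_vec_def by (rule L2_set_le_sum) auto
    also have "\<dots> = real CARD('a)" using that by (simp add: torus_def)
    finally show ?thesis .
  qed
  then show ?thesis by (auto simp: bounded_iff)
qed

lemma compact_torus: "compact (torus :: (complex^'a::finite) set)"
  by (simp add: compact_eq_bounded_closed closed_torus bounded_torus)

lemma continuous_piT: "continuous_on torus (piT v)"
  unfolding piT_def
  by (intro continuous_intros) (auto simp: torus_nz)

definition Stab :: "('m::finite \<Rightarrow> int^'n) \<Rightarrow> real^'n \<Rightarrow> (complex^'m) set" where
  "Stab v p = {s \<in> torus. \<forall>i. p \<bullet> vR v i \<noteq> 0 \<longrightarrow> s$i = 1}"

lemma compact_Stab:
  fixes v :: "'m::finite \<Rightarrow> int^'n::finite"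
  shows "compact (Stab v p)"
proof -
  have "closed {s::complex^'m. \<forall>i. p \<bullet> vR v i \<noteq> 0 \<longrightarrow> s$i = 1}"
    by (intro closed_Collect_all closed_Collect_imp closed_Collect_eq continuous_intros) auto
  then have "closed (Stab v p)"
  proof -
    have "Stab v p = torus \<inter> {s::complex^'m. \<forall>i. p \<bullet> vR v i \<noteq> 0 \<longrightarrow> s$i = 1}"
      by (auto simp: Stab_def)
    then show ?thesis using closed_Int[OF closed_torus \<open>closed {s::complex^'m. _}\<close>] by simp
  qed
  moreover have "Stab v p \<subseteq> torus" by (auto simp: Stab_def)
  ultimately show ?thesis using compact_torus bounded_subset compact_eq_bounded_closed by metis
qed

definition ev :: "'m \<Rightarrow> real \<Rightarrow> real^'m" where
  "ev i t = (\<chi> j. if j = i then t else 0)"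

lemma piR_ev: "piR v (ev i t) = t *\<^sub>R vR v i"
proof -
  have "\<And>j. (ev i t $ j) *\<^sub>R vR v j = (if j = i then t *\<^sub>R vR v i else 0)"
    by (simp add: ev_def)
  then show ?thesis by (simp add: piR_def)
qed

lemma expT_ev_Stab: "p \<bullet> vR v i = 0 \<Longrightarrow> expT (ev i t) \<in> Stab v p"
  by (simp add: Stab_def expT_torus) (simp add: expT_def ev_def)

lemma Sp_eq:
  assumes "p \<in> cone v"
  shows "Sp v p = piT v ` Stab v p"
proof
  let ?G = "{expT (t *\<^sub>R vR v i) | t i. p \<in> facet v i}"
  let ?P = "piT v ` Stab v p"
  have "?P \<in> {H. H \<subseteq> torus \<and> closed H \<and> tone \<in> H \<and>
          (\<forall>g\<in>H. \<forall>h\<in>H. tmult g h \<in> H) \<and> (\<forall>g\<in>H. tinv g \<in> H) \<and> ?G \<subseteq> H}"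
  proof (intro CollectI conjI ballI)
    show "?P \<subseteq> torus" by (auto simp: Stab_def piT_torus)
    have "compact ?P"
      by (rule compact_continuous_image[OF continuous_on_subset[OF continuous_piT] compact_Stab])
        (auto simp: Stab_def)
    then show "closed ?P" by (rule compact_imp_closed)
    have "tone \<in> Stab v p" using tone_torus by (simp add: Stab_def) (simp add: tone_def)
    then show "tone \<in> ?P" by (metis piT_tone image_eqI)
  next
    fix g h assume "g \<in> ?P" "h \<in> ?P"
    then obtain a b where "a \<in> Stab v p" "b \<in> Stab v p" "g = piT v a" "h = piT v b" by auto
    moreover have "tmult a b \<in> Stab v p" using calculation tmult_torus[of a b]
      by (auto simp: Stab_def tmult_def)
    ultimately show "tmult g h \<in> ?P" by (metis piT_tmult image_eqI)
  next
    fix g assume "g \<in> ?P"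
    then obtain a where "a \<in> Stab v p" "g = piT v a" by auto
    moreover have "tinv a \<in> Stab v p" using calculation tinv_torus[of a]
      by (auto simp: Stab_def tinv_def)
    ultimately show "tinv g \<in> ?P" by (metis piT_tinv image_eqI)
  next
    show "?G \<subseteq> ?P"
    proof
      fix x assume "x \<in> ?G"
      then obtain t i where "x = expT (t *\<^sub>R vR v i)" "p \<in> facet v i" by auto
      then have "x = piT v (expT (ev i t))" "expT (ev i t) \<in> Stab v p"
        by (auto simp: piT_expT piR_ev facet_def intro: expT_ev_Stab)
      then show "x \<in> ?P" by auto
    qed
  qed
  then show "Sp v p \<subseteq> ?P"
    unfolding Sp_def closed_subgroup_generated_def by (rule Inter_lower)
next
  show "piT v ` Stab v p \<subseteq> Sp v p"
  proof
    fix x assume "x \<in> piT v ` Stab v p"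
    then obtain s where s: "s \<in> Stab v p" "x = piT v s" by auto
    define y where "y = (\<chi> i. if p \<bullet> vR v i = 0 then Arg (s$i) / (2*pi) else 0)"
    have "expT y = s"
    proof -
      have "expT y $ i = s $ i" for i
      proof (cases "p \<bullet> vR v i = 0")
        case True
        have "s$i \<noteq> 0" "cmod (s$i) = 1" using s(1) by (auto simp: Stab_def torus_def torus_nz)
        then show ?thesis using True by (simp add: expT_def y_def cis_Arg sgn_div_norm)
      next
        case False then show ?thesis using s(1) by (simp add: expT_def y_def Stab_def)
      qed
      then show ?thesis by (simp add: vec_eq_iff)
    qed
    then have x: "x = expT (\<Sum>i\<in>UNIV. y$i *\<^sub>R vR v i)"
      using s(2) piT_expT[of v y] by (simp add: piR_def)
    show "x \<in> Sp v p"
      unfolding Sp_def closed_subgroup_generated_def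
    proof (rule InterI)
      fix H assume "H \<in> {H. H \<subseteq> torus \<and> closed H \<and> tone \<in> H \<and>
          (\<forall>g\<in>H. \<forall>h\<in>H. tmult g h \<in> H) \<and> (\<forall>g\<in>H. tinv g \<in> H) \<and>
          {expT (t *\<^sub>R vR v i) | t i. p \<in> facet v i} \<subseteq> H}"
      then have H: "tone \<in> H" "\<And>g h. g \<in> H \<Longrightarrow> h \<in> H \<Longrightarrow> tmult g h \<in> H"
        "\<And>t i. p \<in> facet v i \<Longrightarrow> expT (t *\<^sub>R vR v i) \<in> H" by blast+
      have tm: "expT (y$i *\<^sub>R vR v i) \<in> H" for i
      proof (cases "p \<bullet> vR v i = 0")
        case True then show ?thesis using H(3) assms by (simp add: facet_def)
      next
        case False then show ?thesis using H(1) by (simp add: y_def expT_0)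
      qed
      have "expT (\<Sum>i\<in>F. y$i *\<^sub>R vR v i) \<in> H" if "finite F" for F
        using that
      proof (induction F rule: finite_induct)
        case empty then show ?case using H(1) by (simp add: expT_0)
      next
        case (insert a F) then show ?case using H(2) tm by (simp add: expT_add)
      qed
      then show "x \<in> H" using x by simp
    qed
  qed
qed



definition zp :: "('m::finite \<Rightarrow> int^'n) \<Rightarrow> real^'n \<Rightarrow> complex^'m" where
  "zp v p = (\<chi> i. complex_of_real (sqrt (p \<bullet> vR v i)))"

definition Gm :: "('m::finite \<Rightarrow> int^'n) \<Rightarrow> (complex^'m) \<times> (real^'n) \<Rightarrow> complex^'m" where
  "Gm v x = tact (fst x) (zp v (snd x))"

definition Em :: "('m::finite \<Rightarrow> int^'n) \<Rightarrow> (complex^'m) \<times> (real^'n) \<Rightarrow> (complex^'n) \<times> (real^'n)" where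
  "Em v x = (piT v (fst x), snd x)"

lemma umap_tact: "g \<in> torus \<Longrightarrow> umap (tact g z) = umap z"
  by (simp add: umap_def tact_def torus_def norm_mult vec_eq_iff)

lemma umap_zp: "p \<in> cone v \<Longrightarrow> umap (zp v p) = Amap v p"
  by (simp add: umap_def zp_def Amap_def cone_def vec_eq_iff)

lemma umap_zero: "umap z = 0 \<Longrightarrow> z = 0"
  by (simp add: umap_def vec_eq_iff)

lemma Zlevel_tact:
  assumes "g \<in> torus" "z \<in> Zlevel v" shows "tact g z \<in> Zlevel v"
proof -
  have "tact g z \<noteq> 0"
  proof
    assume "tact g z = 0"
    then have "umap z = 0" using umap_tact[OF assms(1), of z] by (simp add: umap_def vec_eq_iff)
    then show False using assms(2) umap_zero by (auto simp: Zlevel_def)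
  qed
  then show ?thesis using assms by (simp add: Zlevel_def umap_tact)
qed

lemma Gm_Zlevel:
  assumes sc: "strictly_convex (cone v)" and "w \<in> torus" "p \<in> cone v" "p \<noteq> 0"
  shows "Gm v (w, p) \<in> Zlevel v"
proof -
  have u: "umap (Gm v (w, p)) = Amap v p" using assms by (simp add: Gm_def umap_tact umap_zp)
  have "Gm v (w, p) \<noteq> 0"
  proof
    assume "Gm v (w, p) = 0"
    then have "Amap v p = 0" using u by (simp add: umap_def vec_eq_iff)
    then show False using Amap_zero[OF sc] assms by simp
  qed
  moreover have "\<xi> \<bullet> umap (Gm v (w, p)) = 0" if "\<xi> \<in> lieK v" for \<xi>
    using that by (simp add: u inner_Amap lieK_iff)
  ultimately show ?thesis by (simp add: Zlevel_def)
qed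

lemma Gm_surj:
  assumes sc: "strictly_convex (cone v)" and z: "z \<in> Zlevel v"
  shows "\<exists>w p. w \<in> torus \<and> p \<in> cone v \<and> p \<noteq> 0 \<and> z = Gm v (w, p)"
proof -
  have "\<And>\<xi>. piR v \<xi> = 0 \<Longrightarrow> \<xi> \<bullet> umap z = 0" using z by (simp add: Zlevel_def lieK_iff)
  then obtain p where p: "umap z = Amap v p" using range_Amap by blast
  have pc: "p \<in> cone v" using p by (simp add: Amap_cone flip: p) (simp add: umap_def)
  have p0: "p \<noteq> 0"
  proof
    assume "p = 0"
    then have "umap z = 0" using p linear_0[OF Amap_linear[of v]] by simp
    then show False using z umap_zero by (auto simp: Zlevel_def)
  qed
  define w where "w = (\<chi> i. if z$i = 0 then 1 else sgn (z$i))"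
  have wt: "w \<in> torus" by (simp add: w_def torus_def norm_sgn)
  have "zp v p $ i = complex_of_real (cmod (z$i))" for i
  proof -
    have "p \<bullet> vR v i = (cmod (z$i))^2" using p by (simp add: umap_def Amap_def vec_eq_iff)
    then show ?thesis by (simp add: zp_def)
  qed
  then have "z = Gm v (w, p)"
    by (simp add: Gm_def tact_def w_def vec_eq_iff complex_sgn_def scaleR_conv_of_real)
  then show ?thesis using wt pc p0 by blast
qed

lemma Kker_tone: "tone \<in> Kker v" by (simp add: Kker_def tone_torus)
lemma Kker_tmult: "a \<in> Kker v \<Longrightarrow> b \<in> Kker v \<Longrightarrow> tmult a b \<in> Kker v"
  by (simp add: Kker_def tmult_torus piT_tmult)
lemma Kker_tinv: "a \<in> Kker v \<Longrightarrow> tinv a \<in> Kker v"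
  by (simp add: Kker_def tinv_torus piT_tinv)
lemma Kker_torus: "a \<in> Kker v \<Longrightarrow> a \<in> torus" by (simp add: Kker_def)



lemma Sp_tone: "tone \<in> Sp v p"
  by (auto simp: Sp_def closed_subgroup_generated_def)
lemma Sp_tmult: "a \<in> Sp v p \<Longrightarrow> b \<in> Sp v p \<Longrightarrow> tmult a b \<in> Sp v p"
  by (auto simp: Sp_def closed_subgroup_generated_def)
lemma Sp_tinv: "a \<in> Sp v p \<Longrightarrow> tinv a \<in> Sp v p"
  by (auto simp: Sp_def closed_subgroup_generated_def)

lemma fiber:
  assumes sc: "strictly_convex (cone v)"
    and w: "w \<in> torus" and w': "w' \<in> torus"
    and p: "p \<in> cone v" "p \<noteq> 0" and p': "p' \<in> cone v" "p' \<noteq> 0"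
  shows "(Em v (w, p), Em v (w', p')) \<in> Delta v \<longleftrightarrow> (Gm v (w, p), Gm v (w', p')) \<in> orbitrel v"
proof
  assume "(Em v (w, p), Em v (w', p')) \<in> Delta v"
  then have pp: "p' = p" and "tmult (tinv (piT v w)) (piT v w') \<in> Sp v p"
    by (auto simp: Delta_def Em_def)
  then have "piT v (tmult (tinv w) w') \<in> piT v ` Stab v p"
    using Sp_eq[OF p(1)] by (simp add: piT_tmult piT_tinv)
  then obtain s where s: "s \<in> Stab v p" "piT v s = piT v (tmult (tinv w) w')" by (metis imageE)
  define k where "k = tmult (tmult (tinv w) w') (tinv s)"
  have st: "s \<in> torus" using s by (simp add: Stab_def)
  have kt: "k \<in> torus" unfolding k_def using st w w' by (intro tmult_torus tinv_torus)
  have "piT v k = tone"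
    using s(2) st tmult_tinv(2)[OF tmult_torus[OF tinv_torus[OF piT_torus[OF w]] piT_torus[OF w']], of v v]
    by (simp add: k_def piT_tmult piT_tinv)
  then have kK: "k \<in> Kker v" using kt by (simp add: Kker_def)
  have "Gm v (w', p') = tact k (Gm v (w, p))"
  proof -
    have "w' $ i * zp v p $ i = k $ i * (w $ i * zp v p $ i)" for i
    proof (cases "p \<bullet> vR v i = 0")
      case True then show ?thesis by (simp add: zp_def)
    next
      case False
      then have "s $ i = 1" using s(1) by (simp add: Stab_def)
      then show ?thesis using torus_nz[OF w, of i]
        by (simp add: k_def tmult_def tinv_def field_simps)
    qed
    then show ?thesis by (simp add: Gm_def tact_def vec_eq_iff pp)
  qed
  then show "(Gm v (w, p), Gm v (w', p')) \<in> orbitrel v"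
    using kK Gm_Zlevel[OF sc w p] Gm_Zlevel[OF sc w' p'] unfolding orbitrel_def by blast
next
  assume "(Gm v (w, p), Gm v (w', p')) \<in> orbitrel v"
  then obtain k where kK: "k \<in> Kker v" and eq: "Gm v (w', p') = tact k (Gm v (w, p))"
    by (auto simp: orbitrel_def)
  have kt: "k \<in> torus" using kK by (simp add: Kker_def)
  have "Amap v p' = Amap v p"
    using arg_cong[OF eq, of umap] kt w w' p p'
    by (simp add: Gm_def umap_tact umap_zp)
  then have pp: "p' = p" using Amap_inj[OF sc] by (simp add: inj_eq)
  define s where "s = tmult (tinv k) (tmult (tinv w) w')"
  have st: "s \<in> torus" unfolding s_def using kt w w' by (intro tmult_torus tinv_torus)
  have "s \<in> Stab v p"
  proof -
    have "s $ i = 1" if "p \<bullet> vR v i \<noteq> 0" for i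
    proof -
      have "p \<bullet> vR v i > 0" using that p(1) by (simp add: cone_def order_less_le)
      then have zn: "zp v p $ i \<noteq> 0" by (simp add: zp_def)
      have "w' $ i * zp v p $ i = k $ i * (w $ i * zp v p $ i)"
        using eq pp by (simp add: Gm_def tact_def vec_eq_iff)
      then have "w' $ i = k $ i * w $ i" using zn by (simp add: field_simps)
      then show ?thesis using torus_nz[OF w, of i] torus_nz[OF kt, of i]
        by (simp add: s_def tmult_def tinv_def field_simps)
    qed
    then show ?thesis using st by (simp add: Stab_def)
  qed
  then have "piT v s \<in> Sp v p" using Sp_eq[OF p(1)] by simp
  moreover have "piT v s = tmult (tinv (piT v w)) (piT v w')"
    using kK by (simp add: s_def piT_tmult piT_tinv Kker_def)
  ultimately show "(Em v (w, p), Em v (w', p')) \<in> Delta v"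
    using w w' p pp by (simp add: Delta_def Em_def piT_torus)
qed



lemma istopology_quotient:
  "istopology (\<lambda>U. U \<subseteq> topspace X // R \<and> openin X {x \<in> topspace X. R `` {x} \<in> U})"
proof -
  have 1: "{x \<in> topspace X. R `` {x} \<in> S \<inter> T} =
       {x \<in> topspace X. R `` {x} \<in> S} \<inter> {x \<in> topspace X. R `` {x} \<in> T}" for S T
    by auto
  have 2: "{x \<in> topspace X. R `` {x} \<in> \<Union>K} = \<Union>((\<lambda>S. {x \<in> topspace X. R `` {x} \<in> S}) ` K)" for K
    by auto
  show ?thesis unfolding istopology_def
    by (auto simp only: 1 2 intro!: openin_Int openin_Union)
qed

lemma openin_quotient_topology:
  "openin (quotient_topology X R) U \<longleftrightarrow> U \<subseteq> topspace X // R \<and> openin X {x \<in> topspace X. R `` {x} \<in> U}"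
  unfolding quotient_topology_def using topology_inverse'[OF istopology_quotient[of X R]] by simp

lemma topspace_quotient_topology:
  assumes "equiv (topspace X) R"
  shows "topspace (quotient_topology X R) = topspace X // R"
proof -
  have "{x \<in> topspace X. R `` {x} \<in> topspace X // R} = topspace X"
    by (auto intro: quotientI)
  then have "openin (quotient_topology X R) (topspace X // R)"
    by (simp add: openin_quotient_topology)
  then show ?thesis
    by (metis openin_quotient_topology openin_subset openin_topspace subset_antisym)
qed

lemma quotient_map_quotient_topology:
  assumes "equiv (topspace X) R"
  shows "quotient_map X (quotient_topology X R) (\<lambda>x. R `` {x})"
  unfolding quotient_map_def topspace_quotient_topology[OF assms]
  by (auto simp: openin_quotient_topology quotient_def)



lemma equiv_Delta: "equiv (torus \<times> (cone v - {0})) (Delta v)"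
proof (rule equivI)
  show "refl_on (torus \<times> (cone v - {0})) (Delta v)"
    by (auto simp: refl_on_def Delta_def tmult_tinv Sp_tone)
  show "sym (Delta v)"
  proof (rule symI)
    fix a b assume "(a, b) \<in> Delta v"
    then obtain g p h where "a = (g, p)" "b = (h, p)" "g \<in> torus" "h \<in> torus" "p \<in> cone v - {0}"
      "tmult (tinv g) h \<in> Sp v p" by (auto simp: Delta_def)
    moreover have "tinv (tmult (tinv g) h) = tmult (tinv h) g"
      by (simp add: tinv_tmult tmult_comm)
    ultimately show "(b, a) \<in> Delta v" using Sp_tinv by (fastforce simp: Delta_def)
  qed
  show "trans (Delta v)"
  proof (rule transI)
    fix a b c assume "(a, b) \<in> Delta v" "(b, c) \<in> Delta v"
    then obtain g p h k where "a = (g, p)" "b = (h, p)" "c = (k, p)" "g \<in> torus" "h \<in> torus" "k \<in> torus"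
      "p \<in> cone v - {0}" "tmult (tinv g) h \<in> Sp v p" "tmult (tinv h) k \<in> Sp v p"
      by (auto simp: Delta_def)
    moreover have "tmult (tmult (tinv g) h) (tmult (tinv h) k) = tmult (tinv g) k"
      using \<open>h \<in> torus\<close> by (metis tmult_assoc tmult_tinv(2) tmult_tone(1) tmult_comm)
    ultimately show "(a, c) \<in> Delta v" using Sp_tmult by (fastforce simp: Delta_def)
  qed
qed (auto simp: Delta_def)

lemma orbitrel_iff: "(z, w) \<in> orbitrel v \<longleftrightarrow> z \<in> Zlevel v \<and> w \<in> Zlevel v \<and> (\<exists>k\<in>Kker v. w = tact k z)"
  by (simp add: orbitrel_def)

lemma equiv_orbitrel: "equiv (Zlevel v) (orbitrel v)"
proof (rule equivI)
  show "refl_on (Zlevel v) (orbitrel v)"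
  proof (unfold refl_on_def, intro ballI)
    fix x assume "x \<in> Zlevel v"
    then show "(x, x) \<in> orbitrel v" unfolding orbitrel_def
      using Kker_tone[of v] tact_tone[of x] by (simp, metis)
  qed
  show "sym (orbitrel v)"
  proof (rule symI)
    fix z w assume "(z, w) \<in> orbitrel v"
    then obtain k where "z \<in> Zlevel v" "w \<in> Zlevel v" "k \<in> Kker v" "w = tact k z"
      by (auto simp: orbitrel_def)
    moreover have "tact (tinv k) (tact k z) = z"
      using Kker_torus[OF \<open>k \<in> Kker v\<close>] by (simp flip: tact_tmult add: tmult_tinv)
    ultimately show "(w, z) \<in> orbitrel v" using Kker_tinv unfolding orbitrel_iff by metis
  qed
  show "trans (orbitrel v)"
  proof (rule transI)
    fix x y z assume "(x, y) \<in> orbitrel v" "(y, z) \<in> orbitrel v"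
    then obtain k l where "x \<in> Zlevel v" "z \<in> Zlevel v" "k \<in> Kker v" "l \<in> Kker v" "y = tact k x" "z = tact l y"
      by (auto simp: orbitrel_def)
    then show "(x, z) \<in> orbitrel v" using Kker_tmult unfolding orbitrel_iff by (metis tact_tmult)
  qed
qed (auto simp: orbitrel_def)

lemma piT_surj:
  assumes sc: "strictly_convex (cone v)" and h: "h \<in> torus"
  shows "\<exists>w\<in>torus. piT v w = h"
proof -
  define x where "x = (\<chi> j. Arg (h$j) / (2*pi))"
  have "expT x = h"
    using h by (simp add: expT_def x_def vec_eq_iff cis_Arg torus_nz sgn_div_norm torus_def)
  obtain y where "piR v y = x" using piR_surj[OF sc] by blast
  then have "piT v (expT y) = h" using \<open>expT x = h\<close> by (simp add: piT_expT)
  then show ?thesis using expT_torus by blast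
qed

lemma continuous_Em: "continuous_on (torus \<times> S) (Em v)"
  unfolding Em_def
  by (intro continuous_intros continuous_on_compose2[OF continuous_piT]) auto

lemma continuous_Gm: "continuous_on S (Gm v)"
  unfolding Gm_def tact_def zp_def
  by (intro continuous_intros)

lemma quotient_map_Em:
  fixes v :: "'m::finite \<Rightarrow> int^'n::finite"
  assumes sc: "strictly_convex (cone v)"
  shows "quotient_map (top_of_set (torus \<times> (cone v - {0}))) (top_of_set (torus \<times> (cone v - {0}))) (Em v)"
proof (rule continuous_closed_imp_quotient_map)
  let ?W = "torus \<times> (cone v - {0}) :: ((complex^'m) \<times> (real^'n)) set"
  let ?X = "torus \<times> (cone v - {0}) :: ((complex^'n) \<times> (real^'n)) set"
  have im: "Em v ` ?W = ?X"
  proof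
    show "Em v ` ?W \<subseteq> ?X" by (auto simp: Em_def piT_torus)
    show "?X \<subseteq> Em v ` ?W"
    proof
      fix x assume "x \<in> ?X"
      then obtain h p where "x = (h, p)" "h \<in> torus" "p \<in> cone v - {0}" by auto
      moreover obtain w where "w \<in> torus" "piT v w = h" using piT_surj[OF sc \<open>h \<in> torus\<close>] by blast
      ultimately show "x \<in> Em v ` ?W" by (force simp: Em_def)
    qed
  qed
  then show "Em v ` topspace (top_of_set ?W) = topspace (top_of_set ?X)" by simp
  show "continuous_map (top_of_set ?W) (top_of_set ?X) (Em v)"
    using continuous_Em im by auto
  show "closed_map (top_of_set ?W) (top_of_set ?X) (Em v)"
    unfolding closed_map_def
  proof (intro allI impI)
    fix K assume K: "closedin (top_of_set ?W) K"
    show "closedin (top_of_set ?X) (Em v ` K)"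
    proof (rule proper_map[OF K])
      show "Em v ` ?W \<subseteq> ?X" using im by simp
      fix U assume U: "U \<subseteq> ?X" "compact U"
      let ?P = "snd ` U"
      have cP: "compact ?P" using U(2) by (intro compact_continuous_image continuous_intros)
      have eq: "?W \<inter> Em v -` U = (torus \<times> ?P) \<inter> Em v -` U"
        using U(1) by (force simp: Em_def)
      have "closed ((torus \<times> ?P) \<inter> Em v -` U)"
        by (rule continuous_closed_preimage[OF continuous_Em])
          (auto intro: compact_imp_closed compact_Times compact_torus cP U(2))
      moreover have "compact (torus \<times> ?P)" by (intro compact_Times compact_torus cP)
      ultimately show "compact (?W \<inter> Em v -` U)"
        unfolding eq by (metis compact_Int_closed inf.absorb2 inf_le1)
    qed
  qed
qed



lemma moment_exists:
  fixes v :: "'m::finite \<Rightarrow> int^'n::finite"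
  assumes sc: "strictly_convex (cone v)"
  obtains mu :: "complex^'m \<Rightarrow> real^'n" where "continuous_on UNIV mu"
    "\<And>w p. w \<in> torus \<Longrightarrow> p \<in> cone v \<Longrightarrow> mu (Gm v (w, p)) = p"
proof -
  obtain L where L: "linear L" "L \<circ> Amap v = id"
    using linear_injective_left_inverse[OF Amap_linear Amap_inj[OF sc]] by blast
  have cL: "continuous_on UNIV L"
    using L(1) by (simp add: linear_continuous_on linear_conv_bounded_linear)
  have cu: "continuous_on UNIV (umap :: complex^'m \<Rightarrow> real^'m)"
    unfolding umap_def by (intro continuous_intros)
  show ?thesis
  proof
    show "continuous_on UNIV (\<lambda>z. L (umap z))"
      using continuous_on_compose[OF cu, of L] continuous_on_subset[OF cL] by (simp add: comp_def)
    fix w :: "complex^'m" and p assume "w \<in> torus" "p \<in> cone v"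
    then have "umap (Gm v (w, p)) = Amap v p" by (simp add: Gm_def umap_tact umap_zp)
    then show "L (umap (Gm v (w, p))) = p" using L(2) by (simp add: fun_eq_iff)
  qed
qed

lemma quotient_map_Gm:
  fixes v :: "'m::finite \<Rightarrow> int^'n::finite"
  assumes sc: "strictly_convex (cone v)"
  shows "quotient_map (top_of_set (torus \<times> (cone v - {0}))) (top_of_set (Zlevel v)) (Gm v)"
proof (rule continuous_closed_imp_quotient_map)
  let ?W = "torus \<times> (cone v - {0}) :: ((complex^'m) \<times> (real^'n)) set"
  obtain mu :: "complex^'m \<Rightarrow> real^'n" where mu: "continuous_on UNIV mu"
    "\<And>w p. w \<in> torus \<Longrightarrow> p \<in> cone v \<Longrightarrow> mu (Gm v (w, p)) = p"
    using moment_exists[OF sc] by blast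
  have im: "Gm v ` ?W = Zlevel v"
  proof
    show "Gm v ` ?W \<subseteq> Zlevel v" using Gm_Zlevel[OF sc] by auto
    show "Zlevel v \<subseteq> Gm v ` ?W"
    proof
      fix z assume "z \<in> Zlevel v"
      then obtain w p where "w \<in> torus" "p \<in> cone v" "p \<noteq> 0" "z = Gm v (w, p)"
        using Gm_surj[OF sc] by blast
      then show "z \<in> Gm v ` ?W" by auto
    qed
  qed
  then show "Gm v ` topspace (top_of_set ?W) = topspace (top_of_set (Zlevel v))" by simp
  show "continuous_map (top_of_set ?W) (top_of_set (Zlevel v)) (Gm v)"
    using continuous_Gm im by auto
  show "closed_map (top_of_set ?W) (top_of_set (Zlevel v)) (Gm v)"
    unfolding closed_map_def
  proof (intro allI impI)
    fix K assume K: "closedin (top_of_set ?W) K"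
    show "closedin (top_of_set (Zlevel v)) (Gm v ` K)"
    proof (rule proper_map[OF K])
      show "Gm v ` ?W \<subseteq> Zlevel v" using im by simp
      fix U assume U: "U \<subseteq> Zlevel v" "compact U"
      let ?P = "mu ` U"
      have cP: "compact ?P" using U(2) by (intro compact_continuous_image continuous_on_subset[OF mu(1)]) auto
      have PC: "?P \<subseteq> cone v - {0}"
      proof
        fix q assume "q \<in> ?P"
        then obtain z where "z \<in> U" "q = mu z" by auto
        then obtain w p where "w \<in> torus" "p \<in> cone v" "p \<noteq> 0" "z = Gm v (w, p)"
          using Gm_surj[OF sc] U(1) by blast
        then show "q \<in> cone v - {0}" using \<open>q = mu z\<close> mu(2) by simp
      qed
      have eq: "?W \<inter> Gm v -` U = (torus \<times> ?P) \<inter> Gm v -` U"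
      proof
        show "?W \<inter> Gm v -` U \<subseteq> (torus \<times> ?P) \<inter> Gm v -` U"
        proof
          fix x assume "x \<in> ?W \<inter> Gm v -` U"
          then obtain w p where "x = (w, p)" "w \<in> torus" "p \<in> cone v" "Gm v (w, p) \<in> U" by auto
          then show "x \<in> (torus \<times> ?P) \<inter> Gm v -` U" using mu(2)[of w p] by force
        qed
        show "(torus \<times> ?P) \<inter> Gm v -` U \<subseteq> ?W \<inter> Gm v -` U" using PC by auto
      qed
      have "closed ((torus \<times> ?P) \<inter> Gm v -` U)"
        by (rule continuous_closed_preimage[OF continuous_Gm])
          (auto intro: compact_imp_closed compact_Times compact_torus cP U(2))
      moreover have "compact (torus \<times> ?P)" by (intro compact_Times compact_torus cP)
      ultimately show "compact (?W \<inter> Gm v -` U)"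
        unfolding eq by (metis compact_Int_closed inf.absorb2 inf_le1)
    qed
  qed
qed



theorem proposition3p2:
  fixes v :: "'m::finite \<Rightarrow> int^'n::finite"
  assumes "good_cone v" and "strictly_convex (cone v)"
  shows "\<exists>\<Phi>. homeomorphic_map (Clambda_top v) (symp_cone_top v) \<Phi> \<and>
           (\<forall>g\<in>torus. \<forall>h p. h \<in> torus \<and> p \<in> cone v - {0} \<longrightarrow>
              (\<forall>z\<in>\<Phi> (Delta v `` {(h, p)}).
                 \<Phi> (Delta v `` {(tmult (piT v g) h, p)}) = orbitrel v `` {tact g z}))"
proof -
  note sc = assms(2)
  let ?W = "torus \<times> (cone v - {0}) :: ((complex^'m) \<times> (real^'n)) set"
  let ?X = "torus \<times> (cone v - {0}) :: ((complex^'n) \<times> (real^'n)) set"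
  let ?a0 = "\<lambda>x. Delta v `` {x}"
  let ?b0 = "\<lambda>z. orbitrel v `` {z}"
  define a where "a = ?a0 \<circ> Em v"
  define b where "b = ?b0 \<circ> Gm v"
  have CT: "Clambda_top v = quotient_topology (top_of_set ?X) (Delta v)"
    by (simp add: Clambda_top_def)
  have ST: "symp_cone_top v = quotient_topology (top_of_set (Zlevel v)) (orbitrel v)"
    by (simp add: symp_cone_top_def)
  have q1: "quotient_map (top_of_set ?X) (Clambda_top v) ?a0"
    unfolding CT by (rule quotient_map_quotient_topology) (simp add: equiv_Delta)
  have q2: "quotient_map (top_of_set (Zlevel v)) (symp_cone_top v) ?b0"
    unfolding ST by (rule quotient_map_quotient_topology) (simp add: equiv_orbitrel)
  have qa: "quotient_map (top_of_set ?W) (Clambda_top v) a"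
    unfolding a_def by (rule quotient_map_compose[OF quotient_map_Em[OF sc] q1])
  have qb: "quotient_map (top_of_set ?W) (symp_cone_top v) b"
    unfolding b_def by (rule quotient_map_compose[OF quotient_map_Gm[OF sc] q2])
  have fib: "a x = a y \<longleftrightarrow> b x = b y" if xW: "x \<in> ?W" and yW: "y \<in> ?W" for x y
  proof -
    obtain w p where x: "x = (w, p)" "w \<in> torus" "p \<in> cone v" "p \<noteq> 0" using xW by auto
    obtain w' p' where y: "y = (w', p')" "w' \<in> torus" "p' \<in> cone v" "p' \<noteq> 0" using yW by auto
    have "a x = a y \<longleftrightarrow> (Em v x, Em v y) \<in> Delta v"
      unfolding a_def comp_def
      by (rule eq_equiv_class_iff[OF equiv_Delta]) (use x y in \<open>auto simp: Em_def piT_torus\<close>)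
    also have "\<dots> \<longleftrightarrow> (Gm v x, Gm v y) \<in> orbitrel v"
      using fiber[OF sc x(2) y(2) x(3,4) y(3,4)] x y by simp
    also have "\<dots> \<longleftrightarrow> b x = b y"
      unfolding b_def comp_def
      by (rule eq_equiv_class_iff[OF equiv_orbitrel, symmetric]) (use x y Gm_Zlevel[OF sc] in auto)
    finally show ?thesis .
  qed
  have fib1: "\<And>x y. x \<in> topspace (top_of_set ?W) \<Longrightarrow> y \<in> topspace (top_of_set ?W) \<Longrightarrow> a x = a y \<Longrightarrow> b x = b y"
    using fib by simp
  have fib2: "\<And>x y. x \<in> topspace (top_of_set ?W) \<Longrightarrow> y \<in> topspace (top_of_set ?W) \<Longrightarrow> b x = b y \<Longrightarrow> a x = a y"
    using fib by simp
  obtain \<Phi> where \<Phi>: "continuous_map (Clambda_top v) (symp_cone_top v) \<Phi>"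
    "\<Phi> ` topspace (Clambda_top v) = b ` topspace (top_of_set ?W)"
    "\<And>x. x \<in> topspace (top_of_set ?W) \<Longrightarrow> \<Phi> (a x) = b x"
    using quotient_map_lift_exists[OF qa quotient_imp_continuous_map[OF qb] fib1] by blast
  obtain \<Psi> where \<Psi>: "continuous_map (symp_cone_top v) (Clambda_top v) \<Psi>"
    "\<Psi> ` topspace (symp_cone_top v) = a ` topspace (top_of_set ?W)"
    "\<And>x. x \<in> topspace (top_of_set ?W) \<Longrightarrow> \<Psi> (b x) = a x"
    using quotient_map_lift_exists[OF qb quotient_imp_continuous_map[OF qa] fib2] by blast
  have ima: "a ` ?W = topspace (Clambda_top v)" using qa by (simp add: quotient_map_def)
  have imb: "b ` ?W = topspace (symp_cone_top v)" using qb by (simp add: quotient_map_def)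
  have "homeomorphic_maps (Clambda_top v) (symp_cone_top v) \<Phi> \<Psi>"
    unfolding homeomorphic_maps_def
  proof (intro conjI ballI \<Phi>(1) \<Psi>(1))
    fix y assume "y \<in> topspace (Clambda_top v)"
    then have "y \<in> a ` ?W" using ima by simp
    then obtain x where "y = a x" "x \<in> ?W" by (rule imageE)
    then show "\<Psi> (\<Phi> y) = y" using \<Phi>(3) \<Psi>(3) by simp
  next
    fix y assume "y \<in> topspace (symp_cone_top v)"
    then have "y \<in> b ` ?W" using imb by simp
    then obtain x where "y = b x" "x \<in> ?W" by (rule imageE)
    then show "\<Phi> (\<Psi> y) = y" using \<Phi>(3) \<Psi>(3) by simp
  qed
  then have hom: "homeomorphic_map (Clambda_top v) (symp_cone_top v) \<Phi>"
    using homeomorphic_map_maps by blast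
  have eqv: "\<forall>g\<in>torus. \<forall>h p. h \<in> torus \<and> p \<in> cone v - {0} \<longrightarrow>
              (\<forall>z\<in>\<Phi> (Delta v `` {(h, p)}).
                 \<Phi> (Delta v `` {(tmult (piT v g) h, p)}) = orbitrel v `` {tact g z})"
  proof (intro ballI allI impI)
    fix g :: "complex^'m" and h p z
    assume g: "g \<in> torus" and hp: "h \<in> torus \<and> p \<in> cone v - {0}"
      and z: "z \<in> \<Phi> (Delta v `` {(h, p)})"
    obtain w where w: "w \<in> torus" "piT v w = h" using piT_surj[OF sc] hp by blast
    have gw: "tmult g w \<in> torus" using g w by (simp add: tmult_torus)
    have "Delta v `` {(h, p)} = a (w, p)" using w by (simp add: a_def Em_def)
    then have e1: "\<Phi> (Delta v `` {(h, p)}) = orbitrel v `` {Gm v (w, p)}"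
      using \<Phi>(3)[of "(w, p)"] w hp by (simp add: b_def)
    have "Delta v `` {(tmult (piT v g) h, p)} = a (tmult g w, p)"
      using w by (simp add: a_def Em_def piT_tmult)
    then have e2: "\<Phi> (Delta v `` {(tmult (piT v g) h, p)}) = orbitrel v `` {Gm v (tmult g w, p)}"
      using \<Phi>(3)[of "(tmult g w, p)"] gw hp by (simp add: b_def)
    from z e1 have "(Gm v (w, p), z) \<in> orbitrel v" by simp
    then obtain k where k: "k \<in> Kker v" "z = tact k (Gm v (w, p))" and zl: "z \<in> Zlevel v"
      unfolding orbitrel_iff by blast
    have "tact g z = tact k (Gm v (tmult g w, p))"
    proof -
      have "tact g z = tact (tmult g k) (Gm v (w, p))" using k by (simp add: tact_tmult)
      also have "\<dots> = tact (tmult k g) (Gm v (w, p))" by (simp only: tmult_comm)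
      also have "\<dots> = tact k (tact g (Gm v (w, p)))" by (simp add: tact_tmult)
      also have "tact g (Gm v (w, p)) = Gm v (tmult g w, p)" by (simp add: Gm_def tact_tmult)
      finally show ?thesis .
    qed
    then have "(Gm v (tmult g w, p), tact g z) \<in> orbitrel v"
      unfolding orbitrel_iff using k(1) Gm_Zlevel[OF sc gw] hp Zlevel_tact[OF g zl] by blast
    then have "orbitrel v `` {Gm v (tmult g w, p)} = orbitrel v `` {tact g z}"
      by (rule equiv_class_eq[OF equiv_orbitrel])
    then show "\<Phi> (Delta v `` {(tmult (piT v g) h, p)}) = orbitrel v `` {tact g z}"
      using e2 by simp
  qed
  show ?thesis using hom eqv by blast
qed

end
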